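(* Let $\lambda=(\lambda_1,\dots,\lambda_n)\in\mathbb{R}^n$ with $\lambda_1+\dots+\lambda_n>0$, let $\delta=\delta(\lambda)$, and let $J\subset\{1,\dots,n\}$ with $s_J(\lambda)/|J|=\delta$ and $|J|=N(\lambda)$. Define $\lambda'\in\mathbb{R}^n$ by $\lambda'_i=\lambda_i$ if $i\notin J$ and $\lambda'_i=\lambda_i-\delta$ if $i\in J$. Let $\mathcal{P}'_{ord}(n)$ be the set of $P=(I_1,\dots,I_k)\in\mathcal{P}_{ord}(n)$ for which some $r\in\{1,\dots,k\}$ satisfies $J=I_1\cup\dots\cup I_r$, and $\mathcal{P}'(n)$ its image in $\mathcal{P}(n)$. Then: (i) For every $K\subset\{1,\dots,n\}$ with $K\neq J$, $s_K(\lambda')>0$ if and only if $s_K(\lambda)>0$. (ii) $\mathcal{P}_{ord}(\lambda)=\mathcal{P}_{ord}(\lambda')\sqcup(\mathcal{P}'_{ord}(n)\cap\mathcal{P}_{ord}(\lambda))$ and $\mathcal{P}(\lambda)=\mathcal{P}(\lambda')\sqcup(\mathcal{P}'(n)\cap\mathcal{P}(\lambda))$; in particular $|\mathcal{P}_{ord}(\lambda')|<|\mathcal{P}_{ord}(\lambda)|$ and $|\mathcal{P}(\lambda')|<|\mathcal{P}(\lambda)|$. Let $m=|J|$, write $J=\{i_1<\dots<i_m\}$ and $K:=\{1,\dots,n\}\setminus J=\{j_1<\dots<j_{n-m}\}$, $u_J:J\to\{1,\dots,m\}$, $i_r\mapsto r$, $u_K:K\to\{1,\dots,n-m\}$, $j_r\mapsto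 r$; let $\sigma\in\mathfrak{S}_n$ with $\sigma(i_r)=r$ and $\sigma(j_r)=m+r$, and $\varepsilon_0=\mathrm{sgn}(\sigma)$. Define $\varphi_{ord}:\mathcal{P}'_{ord}(n)\to\mathcal{P}_{ord}(m)\times\mathcal{P}_{ord}(n-m)$ by $\varphi_{ord}(I_1,\dots,I_k)=((u_J(I_1),\dots,u_J(I_r)),(u_K(I_{r+1}),\dots,u_K(I_k)))$ where $I_1\cup\dots\cup I_r=J$, and similarly $\varphi:\mathcal{P}'(n)\to\mathcal{P}(m)\times\mathcal{P}(n-m)$. Let $\mu=(\lambda_{i_1},\dots,\lambda_{i_m})\in\mathbb{R}^m$ and $\nu=(\lambda_{j_1},\dots,\lambda_{j_{n-m}})\in\mathbb{R}^{n-m}$. Then: (iii) For every $P\in\mathcal{P}'_{ord}(n)$, if $\varphi_{ord}(P)=(P_1,P_2)$ then $\varepsilon(P)=\varepsilon_0\varepsilon(P_1)\varepsilon(P_2)$ and $\varepsilon'(P)=\varepsilon'(P_1)\varepsilon'(P_2)$. (iv) $\varphi_{ord}$ induces a bijection $\mathcal{P}'_{ord}(n)\cap\mathcal{P}_{ord}(\lambda)\to\mathcal{P}_{ord}(\mu)\times\mathcal{P}_{ord}(\nu)$, and $\varphi$ induces a bijection $\mathcal{P}'(n)\cap\mathcal{P}(\lambda)\to\mathcal{P}(\mu)\times\mathcal{P}(\nu)$.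
   Context: $s_J(\lambda)=\sum_{i\in J}\lambda_i$. $\delta(\lambda)$ is the minimum of $s_J(\lambda)/|J|$ over subsets $J$ with $s_J(\lambda)>0$; $N(\lambda)$ is the minimum of $|J|$ over subsets $J$ with $s_J(\lambda)/|J|=\delta(\lambda)$. $\mathcal{P}(n)$ (resp. $\mathcal{P}_{ord}(n)$) is the set of partitions (resp. ordered partitions) of $\{1,\dots,n\}$ into nonempty blocks. For $\lambda\in\mathbb{R}^n$: $\mathcal{P}_{ord}(\lambda)$ is the set of $(I_1,\dots,I_k)$ with $s_{I_1}(\lambda)+\dots+s_{I_i}(\lambda)>0$ for all $i$, and $\mathcal{P}(\lambda)$ the set of partitions all of whose blocks have $s_{I_\alpha}(\lambda)>0$. For $P=(I_1,\dots,I_k)$ with $n_i=|I_i|$, $\varepsilon(P)=\mathrm{sgn}(\sigma_P)$ with $\sigma_P$ the unique permutation such that $\sigma_P^{-1}$ maps $\{n_1+\dots+n_i+1,\dots,n_1+\dots+n_{i+1}\}$ increasingly onto $I_{i+1}$; $\varepsilon'(P)=(-1)^{\frac12\sum_i|I_i|(|I_i|-1)}$. *)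

theory Defs
  imports Complex_Main "HOL-Library.Disjoint_Sets" "HOL-Combinatorics.Permutations"
begin

text \<open>Vectors in R^n are functions nat => real, with indices 1..n.\<close>

definition sJ :: "(nat \<Rightarrow> real) \<Rightarrow> nat set \<Rightarrow> real" where
  "sJ lam J = (\<Sum>i\<in>J. lam i)"

definition delta :: "nat \<Rightarrow> (nat \<Rightarrow> real) \<Rightarrow> real" where
  "delta n lam = Min {sJ lam J / real (card J) | J. J \<subseteq> {1..n} \<and> sJ lam J > 0}"

definition Nmin :: "nat \<Rightarrow> (nat \<Rightarrow> real) \<Rightarrow> nat" where
  "Nmin n lam = Min {card J | J. J \<subseteq> {1..n} \<and> sJ lam J / real (card J) = delta n lam}"

definition Pord_n :: "nat \<Rightarrow> nat set list set" where
  "Pord_n n = {Ps. partition_on {1..n} (set Ps) \<and> distinct Ps}"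

definition Part_n :: "nat \<Rightarrow> nat set set set" where
  "Part_n n = {P. partition_on {1..n} P}"

definition Pord :: "nat \<Rightarrow> (nat \<Rightarrow> real) \<Rightarrow> nat set list set" where
  "Pord n lam = {Ps \<in> Pord_n n. \<forall>i\<in>{1..length Ps}. (\<Sum>j<i. sJ lam (Ps ! j)) > 0}"

definition Part :: "nat \<Rightarrow> (nat \<Rightarrow> real) \<Rightarrow> nat set set set" where
  "Part n lam = {P \<in> Part_n n. \<forall>I\<in>P. sJ lam I > 0}"

text \<open>sigma_P^{-1} sends the positions n_1+..+n_i+1,..,n_1+..+n_{i+1} increasingly onto I_{i+1},
  i.e. position p goes to the p-th entry of the concatenation of the sorted blocks.\<close>
definition sigmaP_inv :: "nat set list \<Rightarrow> nat \<Rightarrow> nat" where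
  "sigmaP_inv Ps p = (let L = concat (map sorted_list_of_set Ps) in
      if 1 \<le> p \<and> p \<le> length L then L ! (p - 1) else p)"

definition sigmaP :: "nat set list \<Rightarrow> nat \<Rightarrow> nat" where
  "sigmaP Ps = inv (sigmaP_inv Ps)"

definition eps :: "nat set list \<Rightarrow> int" where
  "eps Ps = sign (sigmaP Ps)"

definition eps' :: "nat set list \<Rightarrow> int" where
  "eps' Ps = (-1) ^ ((\<Sum>I\<leftarrow>Ps. card I * (card I - 1)) div 2)"

definition lam_prime :: "nat \<Rightarrow> (nat \<Rightarrow> real) \<Rightarrow> nat set \<Rightarrow> nat \<Rightarrow> real" where
  "lam_prime n lam J i = (if i \<in> J then lam i - delta n lam else lam i)"

definition Pord' :: "nat \<Rightarrow> nat set \<Rightarrow> nat set list set" where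
  "Pord' n J = {Ps \<in> Pord_n n. \<exists>r\<in>{1..length Ps}. J = \<Union>(set (take r Ps))}"

definition Part' :: "nat \<Rightarrow> nat set \<Rightarrow> nat set set set" where
  "Part' n J = set ` Pord' n J"

definition elem_at :: "nat set \<Rightarrow> nat \<Rightarrow> nat" where
  "elem_at A r = sorted_list_of_set A ! (r - 1)"

definition u :: "nat set \<Rightarrow> nat \<Rightarrow> nat" where
  "u A i = (THE r. 1 \<le> r \<and> r \<le> card A \<and> elem_at A r = i)"

definition Kc :: "nat \<Rightarrow> nat set \<Rightarrow> nat set" where
  "Kc n J = {1..n} - J"

definition sigma0 :: "nat \<Rightarrow> nat set \<Rightarrow> nat \<Rightarrow> nat" where
  "sigma0 n J i = (if i \<in> J then u J i
                   else if i \<in> Kc n J then card J + u (Kc n J) i else i)"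

definition eps0 :: "nat \<Rightarrow> nat set \<Rightarrow> int" where
  "eps0 n J = sign (sigma0 n J)"

definition phi_ord :: "nat \<Rightarrow> nat set \<Rightarrow> nat set list \<Rightarrow> nat set list \<times> nat set list" where
  "phi_ord n J Ps = (let r = (THE r. 1 \<le> r \<and> r \<le> length Ps \<and> \<Union>(set (take r Ps)) = J) in
      (map (\<lambda>I. u J ` I) (take r Ps), map (\<lambda>I. u (Kc n J) ` I) (drop r Ps)))"

definition phi :: "nat \<Rightarrow> nat set \<Rightarrow> nat set set \<Rightarrow> nat set set \<times> nat set set" where
  "phi n J P = ((\<lambda>I. u J ` I) ` {I \<in> P. I \<subseteq> J},
                (\<lambda>I. u (Kc n J) ` I) ` {I \<in> P. I \<subseteq> Kc n J})"

definition mu :: "(nat \<Rightarrow> real) \<Rightarrow> nat set \<Rightarrow> nat \<Rightarrow> real" where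
  "mu lam J r = lam (elem_at J r)"

definition nu :: "nat \<Rightarrow> (nat \<Rightarrow> real) \<Rightarrow> nat set \<Rightarrow> nat \<Rightarrow> real" where
  "nu n lam J r = lam (elem_at (Kc n J) r)"

end

theory Submission
  imports Defs
begin

lemma elem_at_bij:
  assumes "finite A" shows "bij_betw (elem_at A) {1..card A} A"
proof -
  define xs where "xs = sorted_list_of_set A"
  have d: "distinct xs" and s: "set xs = A" and l: "length xs = card A"
    using assms by (auto simp: xs_def)
  show ?thesis unfolding bij_betw_def
  proof
    show "inj_on (elem_at A) {1..card A}"
      unfolding inj_on_def elem_at_def xs_def[symmetric]
      using d l by (auto simp: nth_eq_iff_index_eq)
    show "elem_at A ` {1..card A} = A"
    proof
      show "elem_at A ` {1..card A} \<subseteq> A"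
        unfolding elem_at_def xs_def[symmetric] using s l by auto
      show "A \<subseteq> elem_at A ` {1..card A}"
      proof
        fix x assume "x \<in> A"
        then obtain i where i: "i < length xs" "xs ! i = x" using s by (auto simp: in_set_conv_nth)
        then have "Suc i \<in> {1..card A}" "elem_at A (Suc i) = x" using l by (auto simp: elem_at_def xs_def)
        then show "x \<in> elem_at A ` {1..card A}" by (metis image_eqI)
      qed
    qed
  qed
qed

lemma elem_at_mono:
  assumes "finite A" "1 \<le> r" "r < s" "s \<le> card A"
  shows "elem_at A r < elem_at A s"
proof -
  have "sorted_wrt (<) (sorted_list_of_set A)" by simp
  then show ?thesis using assms unfolding elem_at_def
    by (metis One_nat_def Suc_le_eq Suc_pred diff_less_mono dual_order.strict_trans1
        le_eq_less_or_eq length_sorted_list_of_set sorted_wrt_nth_less zero_less_one)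
qed

lemma u_elem_at:
  assumes "finite A" "r \<in> {1..card A}" shows "u A (elem_at A r) = r"
proof -
  have inj: "inj_on (elem_at A) {1..card A}" using elem_at_bij[OF assms(1)] by (simp add: bij_betw_def)
  show ?thesis unfolding u_def
  proof (rule the_equality)
    show "1 \<le> r \<and> r \<le> card A \<and> elem_at A r = elem_at A r" using assms(2) by simp
    fix r' assume "1 \<le> r' \<and> r' \<le> card A \<and> elem_at A r' = elem_at A r"
    then show "r' = r" using inj_onD[OF inj, of r' r] assms(2) by auto
  qed
qed

lemma u_props:
  assumes "finite A" "i \<in> A" shows "u A i \<in> {1..card A}" "elem_at A (u A i) = i"
proof -
  have "i \<in> elem_at A ` {1..card A}"
    by (subst bij_betw_imp_surj_on[OF elem_at_bij[OF assms(1)]]) (rule assms(2))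
  then obtain r where r: "r \<in> {1..card A}" "i = elem_at A r" by (rule imageE)
  have "u A i = r" using u_elem_at[OF assms(1) r(1)] r(2) by simp
  then show "u A i \<in> {1..card A}" "elem_at A (u A i) = i" using r by auto
qed

lemma u_bij: assumes "finite A" shows "bij_betw (u A) A {1..card A}"
proof (rule bij_betwI[where g="elem_at A"])
  show "u A \<in> A \<rightarrow> {1..card A}" using u_props(1)[OF assms] by blast
  show "elem_at A \<in> {1..card A} \<rightarrow> A"
    using bij_betwE[OF elem_at_bij[OF assms]] by blast
  show "\<And>x. x \<in> A \<Longrightarrow> elem_at A (u A x) = x" using u_props(2)[OF assms] by blast
  show "\<And>y. y \<in> {1..card A} \<Longrightarrow> u A (elem_at A y) = y" using u_elem_at[OF assms] by blast
qed

lemma u_mono: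
  assumes "finite A" "i \<in> A" "j \<in> A" "i < j" shows "u A i < u A j"
proof (rule ccontr)
  assume "\<not> u A i < u A j"
  then have "u A j < u A i \<or> u A j = u A i" by auto
  then show False
  proof
    assume lt: "u A j < u A i"
    have "elem_at A (u A j) < elem_at A (u A i)"
      using elem_at_mono[OF assms(1) _ lt] u_props(1)[OF assms(1) assms(2)] u_props(1)[OF assms(1) assms(3)]
      by simp
    then show False using u_props(2)[OF assms(1) assms(2)] u_props(2)[OF assms(1) assms(3)] assms(4) by simp
  next
    assume "u A j = u A i"
    then have "elem_at A (u A j) = elem_at A (u A i)" by simp
    then show False using u_props(2)[OF assms(1) assms(2)] u_props(2)[OF assms(1) assms(3)] assms(4) by simp
  qed
qed


locale setting =
  fixes n :: nat and lam :: "nat \<Rightarrow> real" and J :: "nat set"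
  assumes pos: "(\<Sum>i=1..n. lam i) > 0"
    and J_sub: "J \<subseteq> {1..n}"
    and J_delta: "sJ lam J / real (card J) = delta n lam"
    and J_card: "card J = Nmin n lam"
begin

abbreviation "\<delta> \<equiv> delta n lam"
abbreviation "lam' \<equiv> lam_prime n lam J"

lemma finJ: "finite J" using J_sub finite_subset by blast

lemma S_fin: "finite {sJ lam K / real (card K) | K. K \<subseteq> {1..n} \<and> sJ lam K > 0}"
proof -
  have "{sJ lam K / real (card K) | K. K \<subseteq> {1..n} \<and> sJ lam K > 0}
        \<subseteq> (\<lambda>K. sJ lam K / real (card K)) ` Pow {1..n}" by auto
  then show ?thesis by (rule finite_subset) auto
qed

lemma total_pos: "sJ lam {1..n} > 0" using pos by (simp add: sJ_def)

lemma delta_le: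
  assumes "K \<subseteq> {1..n}" "sJ lam K > 0" shows "\<delta> \<le> sJ lam K / real (card K)"
  unfolding delta_def by (rule Min_le[OF S_fin]) (use assms in blast)

lemma card_pos: assumes "K \<subseteq> {1..n}" "sJ lam K > 0" shows "card K > 0"
proof (rule ccontr)
  assume "\<not> card K > 0"
  then have "K = {}" using assms(1) finite_subset by fastforce
  then show False using assms(2) by (simp add: sJ_def)
qed

lemma delta_pos: "\<delta> > 0"
proof -
  have "\<delta> \<in> {sJ lam K / real (card K) | K. K \<subseteq> {1..n} \<and> sJ lam K > 0}"
    unfolding delta_def by (rule Min_in[OF S_fin]) (use total_pos in blast)
  then obtain K where K: "K \<subseteq> {1..n}" "sJ lam K > 0" "\<delta> = sJ lam K / real (card K)" by blast
  then show ?thesis using card_pos[OF K(1,2)] by simp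
qed

lemma delta_le':
  assumes "K \<subseteq> {1..n}" "sJ lam K > 0" shows "\<delta> * card K \<le> sJ lam K"
  using delta_le[OF assms] card_pos[OF assms] by (simp add: field_simps)

lemma J_card_pos: "card J > 0"
proof (rule ccontr)
  assume "\<not> card J > 0"
  then have "card J = 0" by simp
  then show False using J_delta delta_pos by simp
qed

lemma J_ne: "J \<noteq> {}" using J_card_pos by auto

lemma sJ_J: "sJ lam J = \<delta> * card J"
  using J_delta J_card_pos by (simp add: field_simps)

lemma sJ_J_pos: "sJ lam J > 0" using sJ_J delta_pos J_card_pos by simp

lemma Nmin_le:
  assumes "K \<subseteq> {1..n}" "sJ lam K / real (card K) = \<delta>" shows "card J \<le> card K"
proof -
  have fin: "finite {card K | K. K \<subseteq> {1..n} \<and> sJ lam K / real (card K) = \<delta>}"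
  proof -
    have "{card K | K. K \<subseteq> {1..n} \<and> sJ lam K / real (card K) = \<delta>} \<subseteq> card ` Pow {1..n}" by auto
    then show ?thesis by (rule finite_subset) auto
  qed
  show ?thesis unfolding J_card Nmin_def by (rule Min_le[OF fin]) (use assms in blast)
qed

lemma KEY:
  assumes "K \<subseteq> {1..n}" "sJ lam K > 0" "K \<noteq> J"
  shows "sJ lam K > \<delta> * card (K \<inter> J)"
proof (cases "K \<subseteq> J")
  case True
  then have KJ: "K \<inter> J = K" by auto
  have "card K < card J" using True assms(3) finJ by (meson psubsetI psubset_card_mono)
  then have "sJ lam K / real (card K) \<noteq> \<delta>" using Nmin_le[OF assms(1)] by fastforce
  moreover have "\<delta> \<le> sJ lam K / real (card K)" by (rule delta_le[OF assms(1,2)])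
  ultimately have "\<delta> < sJ lam K / real (card K)" by simp
  then show ?thesis using KJ card_pos[OF assms(1,2)] by (simp add: field_simps)
next
  case False
  have fK: "finite K" using assms(1) finite_subset by blast
  have "card (K \<inter> J) < card K" by (rule psubset_card_mono[OF fK]) (use False in auto)
  then have "\<delta> * card (K \<inter> J) < \<delta> * card K" using delta_pos by simp
  also have "\<dots> \<le> sJ lam K" by (rule delta_le'[OF assms(1,2)])
  finally show ?thesis .
qed

lemma sJ_lam':
  assumes "finite K" shows "sJ lam' K = sJ lam K - \<delta> * card (K \<inter> J)"
proof -
  have "sJ lam' K = (\<Sum>i\<in>K. lam i - (if i \<in> J then \<delta> else 0))"
    unfolding sJ_def lam_prime_def by (rule sum.cong) auto
  also have "\<dots> = sJ lam K - (\<Sum>i\<in>K. (if i \<in> J then \<delta> else 0))"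
    by (simp add: sum_subtractf sJ_def)
  also have "(\<Sum>i\<in>K. (if i \<in> J then \<delta> else 0)) = (\<Sum>i\<in>K \<inter> J. \<delta>)"
    using sum.inter_restrict[OF assms, of "\<lambda>_. \<delta>" J] by simp
  also have "\<dots> = \<delta> * card (K \<inter> J)" by simp
  finally show ?thesis .
qed

lemma sJ_lam'_J: "sJ lam' J = 0"
  using sJ_lam'[OF finJ] sJ_J by simp

lemma part_i:
  assumes "K \<subseteq> {1..n}" "K \<noteq> J"
  shows "sJ lam' K > 0 \<longleftrightarrow> sJ lam K > 0"
proof -
  have fK: "finite K" using assms(1) finite_subset by blast
  show ?thesis
  proof
    assume "sJ lam' K > 0"
    then show "sJ lam K > 0" using sJ_lam'[OF fK] delta_pos
      by (smt (verit) of_nat_0_le_iff mult_nonneg_nonneg)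
  next
    assume "sJ lam K > 0"
    then show "sJ lam' K > 0" using sJ_lam'[OF fK] KEY[OF assms(1) _ assms(2)] by simp
  qed
qed

lemma KEY2:
  assumes "V \<subseteq> {1..n}" "V \<inter> J = {}" "V \<noteq> {}"
  shows "sJ lam (J \<union> V) = sJ lam J + sJ lam V"
    and "sJ lam (J \<union> V) > 0 \<longleftrightarrow> sJ lam V > 0"
proof -
  have fV: "finite V" using assms(1) finite_subset by blast
  show eq: "sJ lam (J \<union> V) = sJ lam J + sJ lam V"
    unfolding sJ_def by (rule sum.union_disjoint[OF finJ fV]) (use assms(2) in auto)
  show "sJ lam (J \<union> V) > 0 \<longleftrightarrow> sJ lam V > 0"
  proof
    assume a: "sJ lam (J \<union> V) > 0"
    have sub: "J \<union> V \<subseteq> {1..n}" using assms(1) J_sub by auto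
    have "card (J \<union> V) = card J + card V" using card_Un_disjoint[OF finJ fV] assms(2) by auto
    moreover have "card V > 0" using fV assms(3) by auto
    ultimately have "\<delta> * card J < \<delta> * card (J \<union> V)" using delta_pos by simp
    also have "\<dots> \<le> sJ lam (J \<union> V)" by (rule delta_le'[OF sub a])
    finally show "sJ lam V > 0" using eq sJ_J by simp
  next
    assume "sJ lam V > 0" then show "sJ lam (J \<union> V) > 0" using eq sJ_J_pos by simp
  qed
qed

end

definition pre :: "nat set list \<Rightarrow> nat \<Rightarrow> nat set" where
  "pre Ps i = \<Union>(set (take i Ps))"

lemma set_take_nth: "i \<le> length xs \<Longrightarrow> set (take i xs) = (!) xs ` {..<i}"
proof -
  assume i: "i \<le> length xs"
  have "set (take i xs) = {take i xs ! j | j. j < length (take i xs)}" by (simp add: set_conv_nth)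
  also have "\<dots> = (!) xs ` {..<i}" using i by (auto; metis nth_take)
  finally show ?thesis .
qed

lemma blocks_disj:
  assumes "partition_on S (set Ps)" "distinct Ps" "j < length Ps" "j' < length Ps" "j \<noteq> j'"
  shows "Ps ! j \<inter> Ps ! j' = {}"
proof -
  have "Ps ! j \<noteq> Ps ! j'" using assms(2-5) by (simp add: nth_eq_iff_index_eq)
  moreover have "Ps ! j \<in> set Ps" "Ps ! j' \<in> set Ps" using assms(3,4) by auto
  ultimately show ?thesis using partition_onD2[OF assms(1)] by (auto simp: disjoint_def)
qed

lemma block_sub: "partition_on S P \<Longrightarrow> I \<in> P \<Longrightarrow> I \<subseteq> S"
  using partition_onD1 by blast

lemma block_ne: "partition_on S P \<Longrightarrow> I \<in> P \<Longrightarrow> I \<noteq> {}"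
  using partition_onD3 by blast

lemma prefix_sum:
  assumes "partition_on S (set Ps)" "distinct Ps" "finite S" "i \<le> length Ps"
  shows "(\<Sum>j<i. sJ f (Ps ! j)) = sJ f (pre Ps i)"
proof -
  have "pre Ps i = \<Union>((!) Ps ` {..<i})" unfolding pre_def using set_take_nth[OF assms(4)] by simp
  then have "sJ f (pre Ps i) = (\<Sum>j<i. sum f (Ps ! j))"
    unfolding sJ_def
    apply simp
    apply (rule sum.UNION_disjoint)
      apply simp
    using assms block_sub[OF assms(1)] finite_subset apply (meson lessThan_iff nth_mem order_less_le_trans)
    using blocks_disj[OF assms(1,2)] assms(4) by auto
  then show ?thesis by (simp add: sJ_def)
qed

lemma Pord_n_part: "Ps \<in> Pord_n n \<Longrightarrow> partition_on {1..n} (set Ps) \<and> distinct Ps"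
  by (simp add: Pord_n_def)

lemma prefix_sum_Pord:
  assumes "Ps \<in> Pord_n n" "i \<in> {1..length Ps}"
  shows "(\<Sum>j<i. sJ f (Ps ! j)) = sJ f (pre Ps i)"
proof -
  have "partition_on {1..n} (set Ps)" "distinct Ps" using Pord_n_part[OF assms(1)] by auto
  moreover have "i \<le> length Ps" using assms(2) by simp
  ultimately show ?thesis using prefix_sum by blast
qed

lemma Pord_alt: "Pord n f = {Ps \<in> Pord_n n. \<forall>i\<in>{1..length Ps}. sJ f (pre Ps i) > 0}"
proof -
  have "\<And>Ps. Ps \<in> Pord_n n \<Longrightarrow> (\<forall>i\<in>{1..length Ps}. (\<Sum>j<i. sJ f (Ps ! j)) > 0) =
           (\<forall>i\<in>{1..length Ps}. sJ f (pre Ps i) > 0)"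
    using prefix_sum_Pord by (metis (no_types, lifting))
  then show ?thesis unfolding Pord_def by blast
qed

lemma pre_append: "pre (A @ B) i = (if i \<le> length A then pre A i else \<Union>(set A) \<union> pre B (i - length A))"
  unfolding pre_def by auto

lemma pre_sub: "partition_on S (set Ps) \<Longrightarrow> pre Ps i \<subseteq> S"
  unfolding pre_def using partition_onD1 set_take_subset by fastforce

lemma pre_ne:
  assumes "partition_on S (set Ps)" "1 \<le> i" "i \<le> length Ps" shows "pre Ps i \<noteq> {}"
proof -
  have "Ps ! 0 \<in> set (take i Ps)" using assms(2,3) set_take_nth[OF assms(3)] by auto
  moreover have "Ps ! 0 \<in> set Ps" using assms(2,3) by (intro nth_mem) linarith
  then have "Ps ! 0 \<noteq> {}" by (rule block_ne[OF assms(1)])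
  ultimately show ?thesis unfolding pre_def by blast
qed

lemma pre_unique:
  assumes "partition_on S (set Ps)" "distinct Ps" "r < r'" "r' \<le> length Ps"
  shows "pre Ps r \<noteq> pre Ps r'"
proof
  assume eq: "pre Ps r = pre Ps r'"
  have "Ps ! r \<in> set (take r' Ps)" using assms(3,4)
    by (metis in_set_conv_nth length_take min.absorb2 nth_take)
  then have "Ps ! r \<subseteq> pre Ps r'" unfolding pre_def by auto
  then have "Ps ! r \<subseteq> pre Ps r" using eq by simp
  moreover have "Ps ! r \<noteq> {}" using block_ne[OF assms(1)] assms(3,4) by auto
  ultimately obtain x where x: "x \<in> Ps ! r" "x \<in> pre Ps r" by blast
  then obtain j where j: "j < r" "x \<in> Ps ! j"
    unfolding pre_def using set_take_nth[of r Ps] assms(3,4) by auto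
  have "Ps ! j \<inter> Ps ! r = {}" by (rule blocks_disj[OF assms(1,2)]) (use j assms in auto)
  then show False using x j by auto
qed

lemma split_part:
  assumes "partition_on S (set (A @ B))" "distinct (A @ B)" "\<Union>(set A) = J"
  shows "partition_on J (set A)" "partition_on (S - J) (set B)" "distinct A" "distinct B"
    "set A \<inter> set B = {}" "J \<subseteq> S"
proof -
  have d: "disjoint (set A \<union> set B)" using partition_onD2[OF assms(1)] by simp
  have ne: "{} \<notin> set A \<union> set B" using partition_onD3[OF assms(1)] by simp
  have U: "S = \<Union>(set A) \<union> \<Union>(set B)" using partition_onD1[OF assms(1)] by simp
  show AB: "set A \<inter> set B = {}" using assms(2) by simp
  have disjU: "\<Union>(set A) \<inter> \<Union>(set B) = {}"
  proof (rule ccontr)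
    assume "\<Union>(set A) \<inter> \<Union>(set B) \<noteq> {}"
    then obtain x I I' where "x \<in> I" "I \<in> set A" "x \<in> I'" "I' \<in> set B" by blast
    moreover then have "I \<noteq> I'" using AB by auto
    ultimately show False using d by (auto simp: disjoint_def)
  qed
  show "partition_on J (set A)" unfolding partition_on_def using d ne assms(3)
    by (auto simp: disjoint_def)
  show "partition_on (S - J) (set B)" unfolding partition_on_def using d ne assms(3) U disjU
    by (auto simp: disjoint_def)
  show "distinct A" "distinct B" using assms(2) by auto
  show "J \<subseteq> S" using U assms(3) by auto
qed

lemma join_part:
  assumes "partition_on J (set A)" "partition_on K (set B)" "distinct A" "distinct B" "J \<inter> K = {}"
  shows "partition_on (J \<union> K) (set (A @ B))" "distinct (A @ B)"
proof -
  have AB: "set A \<inter> set B = {}"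
  proof (rule ccontr)
    assume "set A \<inter> set B \<noteq> {}"
    then obtain I where I: "I \<in> set A" "I \<in> set B" by blast
    have "I \<subseteq> J" by (rule block_sub[OF assms(1) I(1)])
    moreover have "I \<subseteq> K" by (rule block_sub[OF assms(2) I(2)])
    moreover have "I \<noteq> {}" by (rule block_ne[OF assms(1) I(1)])
    ultimately show False using assms(5) by blast
  qed
  then show "distinct (A @ B)" using assms(3,4) by simp
  have "disjoint (set A \<union> set B)"
  proof (rule disjoint_union)
    show "disjoint (set A)" "disjoint (set B)" using assms(1,2) partition_onD2 by auto
    show "\<Union>(set A) \<inter> \<Union>(set B) = {}" using assms(5) partition_onD1[OF assms(1)] partition_onD1[OF assms(2)] by simp
  qed
  then show "partition_on (J \<union> K) (set (A @ B))"
    using assms(1,2) unfolding partition_on_def by auto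
qed

lemma map_part:
  assumes "partition_on X (set Qs)" "distinct Qs" "inj_on h X"
  shows "partition_on (h ` X) (set (map ((`) h) Qs))" "distinct (map ((`) h) Qs)"
proof -
  have "partition_on (h ` X) ((`) h ` set Qs - {{}})" by (rule partition_on_inj_image[OF assms(1,3)])
  moreover have "(`) h ` set Qs - {{}} = (`) h ` set Qs" using block_ne[OF assms(1)] by auto
  ultimately show "partition_on (h ` X) (set (map ((`) h) Qs))" by simp
  have "inj_on ((`) h) (set Qs)"
    by (rule inj_on_image) (use assms(3) partition_onD1[OF assms(1)] in simp)
  then show "distinct (map ((`) h) Qs)" using assms(2) by (simp add: distinct_map)
qed

lemma map_pre: "pre (map ((`) h) Qs) i = h ` pre Qs i"
  unfolding pre_def by (auto simp: take_map)

lemma sJ_image: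
  assumes "inj_on h X" "Q \<subseteq> X" "\<And>x. x \<in> X \<Longrightarrow> g (h x) = f x"
  shows "sJ g (h ` Q) = sJ f Q"
proof -
  have "sum g (h ` Q) = sum (g \<circ> h) Q" by (rule sum.reindex) (rule inj_on_subset[OF assms(1,2)])
  also have "\<dots> = sum f Q" by (rule sum.cong) (use assms(2,3) in auto)
  finally show ?thesis by (simp add: sJ_def)
qed

lemma map_map_inv:
  assumes "\<And>x. x \<in> X \<Longrightarrow> g (h x) = x" "\<forall>I\<in>set Qs. I \<subseteq> X"
  shows "map ((`) g) (map ((`) h) Qs) = Qs"
proof -
  have "\<And>I. I \<subseteq> X \<Longrightarrow> g ` h ` I = I" using assms(1) by (force simp: image_image)
  then show ?thesis using assms(2) by (induction Qs) auto
qed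


context setting begin

abbreviation "m \<equiv> card J"
abbreviation "K \<equiv> Kc n J"

lemma K_def': "K = {1..n} - J" by (simp add: Kc_def)
lemma finK: "finite K" by (simp add: Kc_def)
lemma JK_disj: "J \<inter> K = {}" by (auto simp: Kc_def)
lemma JK_un: "J \<union> K = {1..n}" using J_sub by (auto simp: Kc_def)
lemma card_K: "card K = n - m" using J_sub by (simp add: Kc_def card_Diff_subset finJ)
lemma m_le: "m \<le> n" using J_sub card_mono[of "{1..n}" J] by simp
lemma K_sub: "K \<subseteq> {1..n}" by (auto simp: Kc_def)

lemma uJ_img: "u J ` J = {1..m}" using bij_betw_imp_surj_on[OF u_bij[OF finJ]] .
lemma uK_img: "u K ` K = {1..n - m}" using bij_betw_imp_surj_on[OF u_bij[OF finK]] card_K by simp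
lemma eJ_img: "elem_at J ` {1..m} = J" using bij_betw_imp_surj_on[OF elem_at_bij[OF finJ]] .
lemma eK_img: "elem_at K ` {1..n - m} = K" using bij_betw_imp_surj_on[OF elem_at_bij[OF finK]] card_K by simp
lemma uJ_inj: "inj_on (u J) J" using bij_betw_imp_inj_on[OF u_bij[OF finJ]] .
lemma uK_inj: "inj_on (u K) K" using bij_betw_imp_inj_on[OF u_bij[OF finK]] .
lemma eJ_inj: "inj_on (elem_at J) {1..m}" using bij_betw_imp_inj_on[OF elem_at_bij[OF finJ]] .
lemma eK_inj: "inj_on (elem_at K) {1..n-m}" using bij_betw_imp_inj_on[OF elem_at_bij[OF finK]] card_K by simp

lemma Pord'_alt:
  "Ps \<in> Pord' n J \<longleftrightarrow> Ps \<in> Pord_n n \<and> (\<exists>A B. Ps = A @ B \<and> A \<noteq> [] \<and> \<Union>(set A) = J)"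
proof
  assume "Ps \<in> Pord' n J"
  then obtain r where r: "Ps \<in> Pord_n n" "r \<in> {1..length Ps}" "J = \<Union>(set (take r Ps))"
    unfolding Pord'_def by blast
  have "take r Ps \<noteq> []" using r(2) by auto
  then show "Ps \<in> Pord_n n \<and> (\<exists>A B. Ps = A @ B \<and> A \<noteq> [] \<and> \<Union>(set A) = J)"
    using r by (metis append_take_drop_id)
next
  assume "Ps \<in> Pord_n n \<and> (\<exists>A B. Ps = A @ B \<and> A \<noteq> [] \<and> \<Union>(set A) = J)"
  then obtain A B where AB: "Ps \<in> Pord_n n" "Ps = A @ B" "A \<noteq> []" "\<Union>(set A) = J" by blast
  have "length A \<in> {1..length Ps}" using AB(2,3) by (simp add: Suc_leI)
  moreover have "J = \<Union>(set (take (length A) Ps))" using AB(2,4) by simp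
  ultimately show "Ps \<in> Pord' n J" unfolding Pord'_def using AB(1) by blast
qed

lemma split_AB:
  assumes "A @ B \<in> Pord_n n" "\<Union>(set A) = J"
  shows "partition_on J (set A)" "partition_on K (set B)" "distinct A" "distinct B"
proof -
  have p: "partition_on {1..n} (set (A @ B))" "distinct (A @ B)" using assms(1) by (auto simp: Pord_n_def)
  show "partition_on J (set A)" "distinct A" "distinct B" using split_part[OF p assms(2)] by auto
  show "partition_on K (set B)" using split_part(2)[OF p assms(2)] by (simp add: Kc_def)
qed

lemma phi_ord_app:
  assumes "A @ B \<in> Pord_n n" "A \<noteq> []" "\<Union>(set A) = J"
  shows "phi_ord n J (A @ B) = (map ((`) (u J)) A, map ((`) (u K)) B)"
proof -
  have p: "partition_on {1..n} (set (A @ B))" "distinct (A @ B)" using assms(1) by (auto simp: Pord_n_def)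
  have "(THE r. 1 \<le> r \<and> r \<le> length (A @ B) \<and> \<Union>(set (take r (A @ B))) = J) = length A"
  proof (rule the_equality)
    show "1 \<le> length A \<and> length A \<le> length (A @ B) \<and> \<Union>(set (take (length A) (A @ B))) = J"
      using assms(2,3) by (simp add: Suc_leI)
    fix r assume r: "1 \<le> r \<and> r \<le> length (A @ B) \<and> \<Union>(set (take r (A @ B))) = J"
    have eq: "pre (A @ B) r = pre (A @ B) (length A)" using r assms(3) by (simp add: pre_def)
    show "r = length A"
    proof (rule ccontr)
      assume "r \<noteq> length A"
      then have "r < length A \<or> length A < r" by auto
      then show False
      proof
        assume "r < length A"
        then show False using pre_unique[OF p, of r "length A"] eq by simp
      next
        assume "length A < r"
        then show False using pre_unique[OF p, of "length A" r] eq r by simp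
      qed
    qed
  qed
  then show ?thesis unfolding phi_ord_def Let_def by simp
qed

lemma Pord_n_sub: "Ps \<in> Pord_n n \<Longrightarrow> pre Ps i \<subseteq> {1..n}"
  using pre_sub Pord_n_part by blast

lemma Pord'_pre: "Ps \<in> Pord' n J \<longleftrightarrow> Ps \<in> Pord_n n \<and> (\<exists>r\<in>{1..length Ps}. pre Ps r = J)"
  unfolding Pord'_def pre_def by auto

lemma ii_ord1: "Pord n lam = Pord n lam' \<union> (Pord' n J \<inter> Pord n lam)"
proof (intro equalityI subsetI)
  fix Ps assume Ps: "Ps \<in> Pord n lam"
  then have P: "Ps \<in> Pord_n n" "\<forall>i\<in>{1..length Ps}. sJ lam (pre Ps i) > 0" by (auto simp: Pord_alt)
  show "Ps \<in> Pord n lam' \<union> (Pord' n J \<inter> Pord n lam)"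
  proof (cases "Ps \<in> Pord' n J")
    case True then show ?thesis using Ps by auto
  next
    case False
    then have ne: "\<forall>i\<in>{1..length Ps}. pre Ps i \<noteq> J" using P(1) by (auto simp: Pord'_pre)
    have "\<forall>i\<in>{1..length Ps}. sJ lam' (pre Ps i) > 0"
      using part_i[OF Pord_n_sub[OF P(1)]] ne P(2) by blast
    then show ?thesis using P(1) by (auto simp: Pord_alt)
  qed
next
  fix Ps assume "Ps \<in> Pord n lam' \<union> (Pord' n J \<inter> Pord n lam)"
  then show "Ps \<in> Pord n lam"
  proof
    assume "Ps \<in> Pord n lam'"
    then have P: "Ps \<in> Pord_n n" "\<forall>i\<in>{1..length Ps}. sJ lam' (pre Ps i) > 0" by (auto simp: Pord_alt)
    have "\<forall>i\<in>{1..length Ps}. pre Ps i \<noteq> J" using P(2) sJ_lam'_J by force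
    then have "\<forall>i\<in>{1..length Ps}. sJ lam (pre Ps i) > 0"
      using part_i[OF Pord_n_sub[OF P(1)]] P(2) by blast
    then show ?thesis using P(1) by (auto simp: Pord_alt)
  qed auto
qed

lemma ii_ord2: "Pord n lam' \<inter> (Pord' n J \<inter> Pord n lam) = {}"
proof (rule ccontr)
  assume "Pord n lam' \<inter> (Pord' n J \<inter> Pord n lam) \<noteq> {}"
  then obtain Ps where "Ps \<in> Pord n lam'" "Ps \<in> Pord' n J" by blast
  then obtain r where "r \<in> {1..length Ps}" "pre Ps r = J" "sJ lam' (pre Ps r) > 0"
    by (auto simp: Pord_alt Pord'_pre)
  then show False using sJ_lam'_J by simp
qed

lemma Part_alt: "Part n f = {P. partition_on {1..n} P \<and> (\<forall>I\<in>P. sJ f I > 0)}"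
  by (simp add: Part_def Part_n_def)

lemma Part'_J: 
  assumes "partition_on {1..n} P" "J \<in> P" shows "P \<in> Part' n J"
proof -
  have fP: "finite P" using finite_elements[OF _ assms(1)] by simp
  obtain L where L: "set L = P - {J}" "distinct L" using finite_distinct_list[of "P - {J}"] fP by auto
  have "set (J # L) = P" using L assms(2) by auto
  moreover have "J # L \<in> Pord_n n" using L calculation assms(1) by (auto simp: Pord_n_def)
  moreover have "J # L \<in> Pord' n J"
    using calculation Pord'_alt[of "J # L"] by (metis append_Cons append_Nil ccpo_Sup_singleton list.discI list.set(1) list.simps(15))
  ultimately show ?thesis unfolding Part'_def by blast
qed

lemma Part'_alt:
  "P \<in> Part' n J \<longleftrightarrow> (\<exists>A B. A @ B \<in> Pord_n n \<and> A \<noteq> [] \<and> \<Union>(set A) = J \<and> P = set (A @ B))"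
proof
  assume "P \<in> Part' n J"
  then obtain Ps where "Ps \<in> Pord' n J" "P = set Ps" unfolding Part'_def by blast
  then show "\<exists>A B. A @ B \<in> Pord_n n \<and> A \<noteq> [] \<and> \<Union>(set A) = J \<and> P = set (A @ B)"
    using Pord'_alt by metis
next
  assume "\<exists>A B. A @ B \<in> Pord_n n \<and> A \<noteq> [] \<and> \<Union>(set A) = J \<and> P = set (A @ B)"
  then obtain A B where AB: "A @ B \<in> Pord_n n" "A \<noteq> []" "\<Union>(set A) = J" "P = set (A @ B)" by blast
  then have "A @ B \<in> Pord' n J" using Pord'_alt by blast
  then show "P \<in> Part' n J" unfolding Part'_def using AB(4) by blast
qed

lemma ii_part1: "Part n lam = Part n lam' \<union> (Part' n J \<inter> Part n lam)"
proof (intro equalityI subsetI)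
  fix P assume Ps: "P \<in> Part n lam"
  then have P: "partition_on {1..n} P" "\<forall>I\<in>P. sJ lam I > 0" by (auto simp: Part_alt)
  show "P \<in> Part n lam' \<union> (Part' n J \<inter> Part n lam)"
  proof (cases "J \<in> P")
    case True then show ?thesis using Ps Part'_J[OF P(1)] by auto
  next
    case False
    have "\<forall>I\<in>P. sJ lam' I > 0"
    proof
      fix I assume "I \<in> P"
      then show "sJ lam' I > 0" using part_i[OF block_sub[OF P(1)], of I] False P(2) by auto
    qed
    then show ?thesis using P(1) by (auto simp: Part_alt)
  qed
next
  fix P assume "P \<in> Part n lam' \<union> (Part' n J \<inter> Part n lam)"
  then show "P \<in> Part n lam"
  proof
    assume "P \<in> Part n lam'"
    then have P: "partition_on {1..n} P" "\<forall>I\<in>P. sJ lam' I > 0" by (auto simp: Part_alt)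
    have "\<forall>I\<in>P. sJ lam I > 0"
    proof
      fix I assume I: "I \<in> P"
      then have "I \<noteq> J" using P(2) sJ_lam'_J by force
      then show "sJ lam I > 0" using part_i[OF block_sub[OF P(1) I]] P(2) I by auto
    qed
    then show ?thesis using P(1) by (auto simp: Part_alt)
  qed auto
qed

lemma ii_part2: "Part n lam' \<inter> (Part' n J \<inter> Part n lam) = {}"
proof (rule ccontr)
  assume "Part n lam' \<inter> (Part' n J \<inter> Part n lam) \<noteq> {}"
  then obtain P where P1: "P \<in> Part n lam'" and P2: "P \<in> Part' n J" by blast
  obtain A B where AB: "A @ B \<in> Pord_n n" "A \<noteq> []" "\<Union>(set A) = J" "P = set (A @ B)"
    using P2[unfolded Part'_alt] by blast
  have "\<forall>I\<in>P. sJ lam' I > 0" using P1 by (simp add: Part_alt)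
  then have pos: "\<forall>I\<in>set A. sJ lam' I > 0" using AB(4) by simp
  have pA: "partition_on J (set A)" by (rule split_AB(1)[OF AB(1,3)])
  have fin: "\<forall>I\<in>set A. finite I"
  proof
    fix I assume "I \<in> set A"
    then have "I \<subseteq> J" by (rule block_sub[OF pA])
    then show "finite I" using finJ by (rule finite_subset)
  qed
  have dis: "\<forall>X\<in>set A. \<forall>Y\<in>set A. X \<noteq> Y \<longrightarrow> X \<inter> Y = {}"
    using partition_onD2[OF pA] by (auto dest: disjointD)
  have "sum lam' (\<Union>(set A)) = (sum \<circ> sum) lam' (set A)"
    by (rule sum.Union_disjoint[OF fin dis])
  then have "sJ lam' J = (\<Sum>I\<in>set A. sJ lam' I)"
    unfolding sJ_def AB(3) by simp
  also have "\<dots> > 0" by (rule sum_pos) (use pos AB(2) in auto)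
  finally show False using sJ_lam'_J by simp
qed

end

context setting begin

lemma K_pos: assumes "K \<noteq> {}" shows "sJ lam K > 0"
proof -
  have "K \<inter> J = {}" using JK_disj by blast
  note e = KEY2(2)[OF K_sub this assms]
  have "sJ lam (J \<union> K) > 0" unfolding JK_un by (rule total_pos)
  then show ?thesis using e by blast
qed

definition B0 :: "nat set list" where "B0 = (if K = {} then [] else [K])"

lemma B0_part: "partition_on K (set B0)" "distinct B0"
proof -
  show "partition_on K (set B0)"
  proof (cases "K = {}")
    case True then show ?thesis unfolding B0_def by (simp add: partition_on_empty)
  next
    case False then show ?thesis unfolding B0_def by (simp add: partition_on_space)
  qed
  show "distinct B0" unfolding B0_def by simp
qed

lemma W_Pord_n: "[J] @ B0 \<in> Pord_n n"
proof -
  have "partition_on J (set [J])" using J_ne by (simp add: partition_on_space)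
  moreover have "distinct [J]" by simp
  ultimately have "partition_on (J \<union> K) (set ([J] @ B0))" "distinct ([J] @ B0)"
    using join_part[OF _ B0_part(1) _ B0_part(2) JK_disj] by blast+
  then show ?thesis unfolding Pord_n_def JK_un by simp
qed

lemma W_Pord': "[J] @ B0 \<in> Pord' n J"
proof -
  have "[J] @ B0 \<in> Pord_n n \<and> (\<exists>A B. [J] @ B0 = A @ B \<and> A \<noteq> [] \<and> \<Union>(set A) = J)"
    by (intro conjI exI[of _ "[J]"] exI[of _ B0]) (use W_Pord_n in auto)
  then show ?thesis by (rule Pord'_alt[THEN iffD2])
qed

lemma W_Pord: "[J] @ B0 \<in> Pord n lam"
proof -
  have "\<forall>i\<in>{1..length ([J] @ B0)}. sJ lam (pre ([J] @ B0) i) > 0"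
  proof
    fix i assume i: "i \<in> {1..length ([J] @ B0)}"
    show "sJ lam (pre ([J] @ B0) i) > 0"
    proof (cases "i = 1")
      case True
      then have "pre ([J] @ B0) i = J" by (simp add: pre_def)
      then show ?thesis using sJ_J_pos by simp
    next
      case False
      then have "i = 2" "K \<noteq> {}" using i by (auto simp: B0_def split: if_splits)
      then have "pre ([J] @ B0) i = J \<union> K" by (simp add: pre_def B0_def numeral_2_eq_2)
      then show ?thesis using JK_un total_pos by simp
    qed
  qed
  then show ?thesis using W_Pord_n by (simp add: Pord_alt)
qed

lemma W_Part: "set ([J] @ B0) \<in> Part n lam"
proof -
  have "partition_on {1..n} (set ([J] @ B0))" using W_Pord_n by (simp add: Pord_n_def)
  moreover have "\<forall>I\<in>set ([J] @ B0). sJ lam I > 0"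
    using sJ_J_pos K_pos by (auto simp: B0_def split: if_splits)
  ultimately show ?thesis by (simp add: Part_alt)
qed

lemma W_Part': "set ([J] @ B0) \<in> Part' n J"
  using W_Pord' unfolding Part'_def by blast

lemma fin_Pord: "finite (Pord n f)"
proof (rule finite_subset)
  show "Pord n f \<subseteq> {xs. set xs \<subseteq> Pow {1..n} \<and> distinct xs}"
    unfolding Pord_def Pord_n_def using partition_onD1 by fastforce
  show "finite {xs. set xs \<subseteq> Pow {1..n} \<and> distinct xs}" by (rule finite_subset_distinct) simp
qed

lemma fin_Part: "finite (Part n f)"
proof (rule finite_subset)
  show "Part n f \<subseteq> Pow (Pow {1..n})"
    unfolding Part_def Part_n_def using partition_onD1 by fastforce
qed simp

lemma card_ord: "card (Pord n lam') < card (Pord n lam)"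
proof (rule psubset_card_mono[OF fin_Pord])
  show "Pord n lam' \<subset> Pord n lam"
  proof
    show "Pord n lam' \<subseteq> Pord n lam" using ii_ord1 by blast
    show "Pord n lam' \<noteq> Pord n lam" using ii_ord2 W_Pord W_Pord' by blast
  qed
qed

lemma card_part: "card (Part n lam') < card (Part n lam)"
proof (rule psubset_card_mono[OF fin_Part])
  show "Part n lam' \<subset> Part n lam"
  proof
    show "Part n lam' \<subseteq> Part n lam" using ii_part1 by blast
    show "Part n lam' \<noteq> Part n lam" using ii_part2 W_Part W_Part' by blast
  qed
qed

lemma phi_ord_wd:
  assumes "A @ B \<in> Pord_n n" "\<Union>(set A) = J"
  shows "map ((`) (u J)) A \<in> Pord_n m" "map ((`) (u K)) B \<in> Pord_n (n - m)"
proof -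
  note s = split_AB[OF assms]
  show "map ((`) (u J)) A \<in> Pord_n m"
    using map_part[OF s(1) s(3) uJ_inj] uJ_img by (simp add: Pord_n_def)
  show "map ((`) (u K)) B \<in> Pord_n (n - m)"
    using map_part[OF s(2) s(4) uK_inj] uK_img by (simp add: Pord_n_def)
qed

lemma wd_ord: "phi_ord n J ` Pord' n J \<subseteq> Pord_n m \<times> Pord_n (n - m)"
proof
  fix x assume "x \<in> phi_ord n J ` Pord' n J"
  then obtain Ps where Ps: "Ps \<in> Pord' n J" "x = phi_ord n J Ps" by blast
  then obtain A B where AB: "Ps \<in> Pord_n n" "Ps = A @ B" "A \<noteq> []" "\<Union>(set A) = J"
    using Pord'_alt by blast
  have "x = (map ((`) (u J)) A, map ((`) (u K)) B)"
    using Ps(2) phi_ord_app[of A B] AB by simp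
  then show "x \<in> Pord_n m \<times> Pord_n (n - m)" using phi_ord_wd[of A B] AB by simp
qed

lemma phi_set:
  assumes "A @ B \<in> Pord_n n" "A \<noteq> []" "\<Union>(set A) = J"
  shows "phi n J (set (A @ B)) = map_prod set set (phi_ord n J (A @ B))"
proof -
  note s = split_AB[OF assms(1,3)]
  have 1: "{I \<in> set (A @ B). I \<subseteq> J} = set A"
  proof -
    have "\<And>I. I \<in> set B \<Longrightarrow> \<not> I \<subseteq> J"
      using block_sub[OF s(2)] block_ne[OF s(2)] JK_disj by blast
    moreover have "\<And>I. I \<in> set A \<Longrightarrow> I \<subseteq> J" using block_sub[OF s(1)] by blast
    ultimately show ?thesis by auto
  qed
  have 2: "{I \<in> set (A @ B). I \<subseteq> K} = set B"
  proof -
    have "\<And>I. I \<in> set A \<Longrightarrow> \<not> I \<subseteq> K"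
      using block_sub[OF s(1)] block_ne[OF s(1)] JK_disj by blast
    moreover have "\<And>I. I \<in> set B \<Longrightarrow> I \<subseteq> K" using block_sub[OF s(2)] by blast
    ultimately show ?thesis by auto
  qed
  show ?thesis unfolding phi_ord_app[OF assms] phi_def 1 2 by simp
qed

lemma wd_part: "phi n J ` Part' n J \<subseteq> Part_n m \<times> Part_n (n - m)"
proof
  fix x assume "x \<in> phi n J ` Part' n J"
  then obtain P where P: "P \<in> Part' n J" "x = phi n J P" by blast
  then obtain A B where AB: "A @ B \<in> Pord_n n" "A \<noteq> []" "\<Union>(set A) = J" "P = set (A @ B)"
    using P(1)[unfolded Part'_alt] by blast
  have "x = map_prod set set (phi_ord n J (A @ B))" using phi_set[OF AB(1-3)] P(2) AB(4) by simp
  moreover have "phi_ord n J (A @ B) \<in> Pord_n m \<times> Pord_n (n - m)"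
    using wd_ord Pord'_alt AB by blast
  ultimately show "x \<in> Part_n m \<times> Part_n (n - m)"
    by (auto simp: Pord_n_def Part_n_def)
qed

end

context setting begin

abbreviation "\<mu> \<equiv> mu lam J"
abbreviation "\<nu> \<equiv> nu n lam J"

lemma sJ_mu: assumes "X \<subseteq> J" shows "sJ \<mu> (u J ` X) = sJ lam X"
proof (rule sJ_image[OF uJ_inj assms])
  fix x assume "x \<in> J" then show "\<mu> (u J x) = lam x" using u_props(2)[OF finJ] by (simp add: mu_def)
qed

lemma sJ_nu: assumes "X \<subseteq> K" shows "sJ \<nu> (u K ` X) = sJ lam X"
proof (rule sJ_image[OF uK_inj assms])
  fix x assume "x \<in> K" then show "\<nu> (u K x) = lam x" using u_props(2)[OF finK] by (simp add: nu_def)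
qed

lemma sJ_mu': assumes "Y \<subseteq> {1..m}" shows "sJ lam (elem_at J ` Y) = sJ \<mu> Y"
  by (rule sJ_image[OF eJ_inj assms]) (simp add: mu_def)

lemma sJ_nu': assumes "Y \<subseteq> {1..n-m}" shows "sJ lam (elem_at K ` Y) = sJ \<nu> Y"
  by (rule sJ_image[OF eK_inj assms]) (simp add: nu_def)

definition psi :: "nat set list \<times> nat set list \<Rightarrow> nat set list" where
  "psi PP = map ((`) (elem_at J)) (fst PP) @ map ((`) (elem_at K)) (snd PP)"

lemma psi_basic:
  assumes "L1 \<in> Pord_n m" "L2 \<in> Pord_n (n - m)"
  shows "partition_on J (set (map ((`) (elem_at J)) L1))" "distinct (map ((`) (elem_at J)) L1)"
    "partition_on K (set (map ((`) (elem_at K)) L2))" "distinct (map ((`) (elem_at K)) L2)"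
    "psi (L1, L2) \<in> Pord' n J" "phi_ord n J (psi (L1, L2)) = (L1, L2)"
    "map ((`) (elem_at J)) L1 \<noteq> []"  "\<Union>(set (map ((`) (elem_at J)) L1)) = J"
proof -
  have p1: "partition_on {1..m} (set L1)" "distinct L1" and p2: "partition_on {1..n-m} (set L2)" "distinct L2"
    using assms by (auto simp: Pord_n_def)
  show a1: "partition_on J (set (map ((`) (elem_at J)) L1))" "distinct (map ((`) (elem_at J)) L1)"
    using map_part[OF p1 eJ_inj] eJ_img by auto
  show a2: "partition_on K (set (map ((`) (elem_at K)) L2))" "distinct (map ((`) (elem_at K)) L2)"
    using map_part[OF p2 eK_inj] eK_img by auto
  have j: "partition_on (J \<union> K) (set (psi (L1, L2)))" "distinct (psi (L1, L2))"
    using join_part[OF a1(1) a2(1) a1(2) a2(2) JK_disj] by (auto simp: psi_def)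
  then have inP: "psi (L1, L2) \<in> Pord_n n" unfolding Pord_n_def JK_un by simp
  show U: "\<Union>(set (map ((`) (elem_at J)) L1)) = J" using partition_onD1[OF a1(1)] by simp
  show ne: "map ((`) (elem_at J)) L1 \<noteq> []" using U J_ne by auto
  have "psi (L1, L2) \<in> Pord_n n \<and> (\<exists>A B. psi (L1, L2) = A @ B \<and> A \<noteq> [] \<and> \<Union>(set A) = J)"
    by (intro conjI inP exI[of _ "map ((`) (elem_at J)) L1"] exI[of _ "map ((`) (elem_at K)) L2"])
       (use ne U in \<open>auto simp: psi_def\<close>)
  then show "psi (L1, L2) \<in> Pord' n J" by (rule Pord'_alt[THEN iffD2])
  have "phi_ord n J (psi (L1, L2)) = (map ((`) (u J)) (map ((`) (elem_at J)) L1), map ((`) (u K)) (map ((`) (elem_at K)) L2))"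
    unfolding psi_def using phi_ord_app inP ne U unfolding psi_def by simp
  also have "map ((`) (u J)) (map ((`) (elem_at J)) L1) = L1"
    by (rule map_map_inv[where X="{1..m}"]) (use u_elem_at[OF finJ] block_sub[OF p1(1)] in auto)
  also have "map ((`) (u K)) (map ((`) (elem_at K)) L2) = L2"
    by (rule map_map_inv[where X="{1..n-m}"]) (use u_elem_at[OF finK] card_K block_sub[OF p2(1)] in auto)
  finally show "phi_ord n J (psi (L1, L2)) = (L1, L2)" .
qed

lemma phi_basic:
  assumes "A @ B \<in> Pord_n n" "A \<noteq> []" "\<Union>(set A) = J"
  shows "psi (phi_ord n J (A @ B)) = A @ B"
proof -
  note s = split_AB[OF assms(1,3)]
  have "map ((`) (elem_at J)) (map ((`) (u J)) A) = A"
    by (rule map_map_inv[where X=J]) (use u_props(2)[OF finJ] block_sub[OF s(1)] in auto)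
  moreover have "map ((`) (elem_at K)) (map ((`) (u K)) B) = B"
    by (rule map_map_inv[where X=K]) (use u_props(2)[OF finK] block_sub[OF s(2)] in auto)
  ultimately show ?thesis unfolding phi_ord_app[OF assms] psi_def by simp
qed

lemma iv_ord: "bij_betw (phi_ord n J) (Pord' n J \<inter> Pord n lam) (Pord m \<mu> \<times> Pord (n - m) \<nu>)"
proof (rule bij_betwI[where g=psi])
  show "phi_ord n J \<in> Pord' n J \<inter> Pord n lam \<rightarrow> Pord m \<mu> \<times> Pord (n - m) \<nu>"
  proof
    fix Ps assume Ps: "Ps \<in> Pord' n J \<inter> Pord n lam"
    then obtain A B where AB: "Ps \<in> Pord_n n" "Ps = A @ B" "A \<noteq> []" "\<Union>(set A) = J"
      using Pord'_alt by blast
    have posP: "\<forall>i\<in>{1..length Ps}. sJ lam (pre Ps i) > 0" using Ps by (simp add: Pord_alt)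
    note s = split_AB[OF AB(1)[unfolded AB(2)] AB(4)]
    note w = phi_ord_wd[OF AB(1)[unfolded AB(2)] AB(4)]
    have e: "phi_ord n J Ps = (map ((`) (u J)) A, map ((`) (u K)) B)"
      using phi_ord_app[of A B] AB by simp
    have "\<forall>i\<in>{1..length (map ((`) (u J)) A)}. sJ \<mu> (pre (map ((`) (u J)) A) i) > 0"
    proof
      fix i assume i: "i \<in> {1..length (map ((`) (u J)) A)}"
      have "sJ \<mu> (pre (map ((`) (u J)) A) i) = sJ lam (pre A i)"
        unfolding map_pre by (rule sJ_mu[OF pre_sub[OF s(1)]])
      also have "pre A i = pre Ps i" using i AB(2) by (simp add: pre_append)
      finally show "sJ \<mu> (pre (map ((`) (u J)) A) i) > 0" using posP i AB(2) by simp
    qed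
    then have 1: "map ((`) (u J)) A \<in> Pord m \<mu>" using w(1) by (simp add: Pord_alt)
    have "\<forall>i\<in>{1..length (map ((`) (u K)) B)}. sJ \<nu> (pre (map ((`) (u K)) B) i) > 0"
    proof
      fix i assume i: "i \<in> {1..length (map ((`) (u K)) B)}"
      have V: "pre B i \<subseteq> K" by (rule pre_sub[OF s(2)])
      have "sJ \<nu> (pre (map ((`) (u K)) B) i) = sJ lam (pre B i)"
        unfolding map_pre by (rule sJ_nu[OF V])
      moreover have "pre Ps (length A + i) = J \<union> pre B i" using i AB(2,4) by (simp add: pre_append)
      moreover have "sJ lam (pre Ps (length A + i)) > 0" using posP i AB(2) by simp
      moreover have "pre B i \<noteq> {}" using pre_ne[OF s(2)] i by simp
      moreover have "pre B i \<subseteq> {1..n}" "pre B i \<inter> J = {}" using V K_sub JK_disj by auto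
      ultimately show "sJ \<nu> (pre (map ((`) (u K)) B) i) > 0" using KEY2(2) by metis
    qed
    then have 2: "map ((`) (u K)) B \<in> Pord (n - m) \<nu>" using w(2) by (simp add: Pord_alt)
    show "phi_ord n J Ps \<in> Pord m \<mu> \<times> Pord (n - m) \<nu>" using 1 2 e by simp
  qed
  show "psi \<in> Pord m \<mu> \<times> Pord (n - m) \<nu> \<rightarrow> Pord' n J \<inter> Pord n lam"
  proof
    fix PP assume PP: "PP \<in> Pord m \<mu> \<times> Pord (n - m) \<nu>"
    obtain L1 L2 where L: "PP = (L1, L2)" by (cases PP)
    have L1: "L1 \<in> Pord_n m" "\<forall>i\<in>{1..length L1}. sJ \<mu> (pre L1 i) > 0"
      and L2: "L2 \<in> Pord_n (n - m)" "\<forall>i\<in>{1..length L2}. sJ \<nu> (pre L2 i) > 0"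
      using PP L by (auto simp: Pord_alt)
    note b = psi_basic[OF L1(1) L2(1)]
    have p1: "partition_on {1..m} (set L1)" and p2: "partition_on {1..n-m} (set L2)"
      using L1(1) L2(1) by (auto simp: Pord_n_def)
    have "\<forall>i\<in>{1..length (psi (L1, L2))}. sJ lam (pre (psi (L1, L2)) i) > 0"
    proof
      fix i assume i: "i \<in> {1..length (psi (L1, L2))}"
      show "sJ lam (pre (psi (L1, L2)) i) > 0"
      proof (cases "i \<le> length L1")
        case True
        then have "pre (psi (L1, L2)) i = elem_at J ` pre L1 i"
          by (simp add: psi_def pre_append map_pre)
        then show ?thesis using sJ_mu'[OF pre_sub[OF p1]] L1(2) True i by simp
      next
        case False
        define j where "j = i - length L1"
        have j: "j \<in> {1..length L2}" using i False by (auto simp: j_def psi_def)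
        have "pre (psi (L1, L2)) i = J \<union> elem_at K ` pre L2 j"
          using False b(8) by (simp add: psi_def pre_append map_pre j_def)
        moreover have "sJ lam (elem_at K ` pre L2 j) > 0"
          using sJ_nu'[OF pre_sub[OF p2]] L2(2) j by simp
        moreover have "elem_at K ` pre L2 j \<subseteq> K" using pre_sub[OF p2, of j] eK_img by blast
        moreover then have "elem_at K ` pre L2 j \<subseteq> {1..n}" "elem_at K ` pre L2 j \<inter> J = {}"
          using K_sub JK_disj by auto
        moreover have "elem_at K ` pre L2 j \<noteq> {}" using pre_ne[OF p2] j by simp
        ultimately show ?thesis using KEY2(2) by metis
      qed
    qed
    then have "psi (L1, L2) \<in> Pord n lam" using b(5) by (simp add: Pord_alt Pord'_alt)
    then show "psi PP \<in> Pord' n J \<inter> Pord n lam" using b(5) L by simp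
  qed
  show "\<And>x. x \<in> Pord' n J \<inter> Pord n lam \<Longrightarrow> psi (phi_ord n J x) = x"
  proof -
    fix Ps assume "Ps \<in> Pord' n J \<inter> Pord n lam"
    then obtain A B where AB: "Ps \<in> Pord_n n" "Ps = A @ B" "A \<noteq> []" "\<Union>(set A) = J"
      using Pord'_alt by blast
    then show "psi (phi_ord n J Ps) = Ps" using phi_basic by simp
  qed
  show "\<And>y. y \<in> Pord m \<mu> \<times> Pord (n - m) \<nu> \<Longrightarrow> phi_ord n J (psi y) = y"
  proof -
    fix PP assume PP: "PP \<in> Pord m \<mu> \<times> Pord (n - m) \<nu>"
    obtain L1 L2 where L: "PP = (L1, L2)" by (cases PP)
    have "L1 \<in> Pord_n m" "L2 \<in> Pord_n (n - m)" using PP L by (auto simp: Pord_def)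
    then show "phi_ord n J (psi PP) = PP" using psi_basic(6) L by simp
  qed
qed

end

lemma Part_alt2: "Part n' f = {P. partition_on {1..n'} P \<and> (\<forall>I\<in>P. sJ f I > 0)}"
  by (simp add: Part_def Part_n_def)

context setting begin

definition psi' :: "nat set set \<times> nat set set \<Rightarrow> nat set set" where
  "psi' QQ = (`) (elem_at J) ` fst QQ \<union> (`) (elem_at K) ` snd QQ"

lemma set_psi: "set (psi (L1, L2)) = psi' (set L1, set L2)"
  by (simp add: psi_def psi'_def)

lemma iv_part: "bij_betw (phi n J) (Part' n J \<inter> Part n lam) (Part m \<mu> \<times> Part (n - m) \<nu>)"
proof (rule bij_betwI[where g=psi'])
  show "phi n J \<in> Part' n J \<inter> Part n lam \<rightarrow> Part m \<mu> \<times> Part (n - m) \<nu>"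
  proof
    fix P assume P: "P \<in> Part' n J \<inter> Part n lam"
    then obtain A B where AB: "A @ B \<in> Pord_n n" "A \<noteq> []" "\<Union>(set A) = J" "P = set (A @ B)"
      using Part'_alt by blast
    have posP: "\<forall>I\<in>P. sJ lam I > 0" using P by (simp add: Part_alt2)
    note s = split_AB[OF AB(1) AB(3)]
    note w = phi_ord_wd[OF AB(1) AB(3)]
    have e: "phi n J P = (set (map ((`) (u J)) A), set (map ((`) (u K)) B))"
      using phi_set[OF AB(1-3)] phi_ord_app[OF AB(1-3)] AB(4) by simp
    have 1: "set (map ((`) (u J)) A) \<in> Part m \<mu>"
    proof -
      have "\<forall>I'\<in>set (map ((`) (u J)) A). sJ \<mu> I' > 0"
      proof
        fix I' assume "I' \<in> set (map ((`) (u J)) A)"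
        then obtain I where I: "I \<in> set A" "I' = u J ` I" by auto
        have "sJ \<mu> I' = sJ lam I" using sJ_mu[OF block_sub[OF s(1) I(1)]] I(2) by simp
        then show "sJ \<mu> I' > 0" using posP I(1) AB(4) by simp
      qed
      then show ?thesis using w(1) by (simp add: Part_alt2 Pord_n_def)
    qed
    have 2: "set (map ((`) (u K)) B) \<in> Part (n - m) \<nu>"
    proof -
      have "\<forall>I'\<in>set (map ((`) (u K)) B). sJ \<nu> I' > 0"
      proof
        fix I' assume "I' \<in> set (map ((`) (u K)) B)"
        then obtain I where I: "I \<in> set B" "I' = u K ` I" by auto
        have "sJ \<nu> I' = sJ lam I" using sJ_nu[OF block_sub[OF s(2) I(1)]] I(2) by simp
        then show "sJ \<nu> I' > 0" using posP I(1) AB(4) by simp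
      qed
      then show ?thesis using w(2) by (simp add: Part_alt2 Pord_n_def)
    qed
    show "phi n J P \<in> Part m \<mu> \<times> Part (n - m) \<nu>" using 1 2 e by simp
  qed
  show "psi' \<in> Part m \<mu> \<times> Part (n - m) \<nu> \<rightarrow> Part' n J \<inter> Part n lam"
  proof
    fix QQ assume QQ: "QQ \<in> Part m \<mu> \<times> Part (n - m) \<nu>"
    obtain Q1 Q2 where Q: "QQ = (Q1, Q2)" by (cases QQ)
    have Q1: "partition_on {1..m} Q1" "\<forall>I\<in>Q1. sJ \<mu> I > 0"
      and Q2: "partition_on {1..n-m} Q2" "\<forall>I\<in>Q2. sJ \<nu> I > 0"
      using QQ Q by (auto simp: Part_alt2)
    obtain L1 where L1: "set L1 = Q1" "distinct L1"
      using finite_distinct_list[OF finite_elements[OF _ Q1(1)]] by auto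
    obtain L2 where L2: "set L2 = Q2" "distinct L2"
      using finite_distinct_list[OF finite_elements[OF _ Q2(1)]] by auto
    have inL: "L1 \<in> Pord_n m" "L2 \<in> Pord_n (n - m)" using L1 L2 Q1 Q2 by (auto simp: Pord_n_def)
    note b = psi_basic[OF inL]
    have eq: "psi' QQ = set (psi (L1, L2))" using set_psi L1 L2 Q by simp
    have "psi' QQ \<in> Part' n J" unfolding eq Part'_def using b(5) by blast
    moreover have "psi' QQ \<in> Part n lam"
    proof -
      have "psi (L1, L2) \<in> Pord_n n" using b(5) Pord'_alt by blast
      then have "partition_on {1..n} (psi' QQ)" unfolding eq by (simp add: Pord_n_def)
      moreover have "\<forall>I\<in>psi' QQ. sJ lam I > 0"
      proof
        fix I assume "I \<in> psi' QQ"
        then have "(\<exists>I'\<in>Q1. I = elem_at J ` I') \<or> (\<exists>I'\<in>Q2. I = elem_at K ` I')"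
          unfolding psi'_def Q by auto
        then show "sJ lam I > 0"
        proof
          assume "\<exists>I'\<in>Q1. I = elem_at J ` I'"
          then obtain I' where I': "I' \<in> Q1" "I = elem_at J ` I'" by blast
          show ?thesis using sJ_mu'[OF block_sub[OF Q1(1) I'(1)]] I' Q1(2) by simp
        next
          assume "\<exists>I'\<in>Q2. I = elem_at K ` I'"
          then obtain I' where I': "I' \<in> Q2" "I = elem_at K ` I'" by blast
          show ?thesis using sJ_nu'[OF block_sub[OF Q2(1) I'(1)]] I' Q2(2) by simp
        qed
      qed
      ultimately show ?thesis by (simp add: Part_alt2)
    qed
    ultimately show "psi' QQ \<in> Part' n J \<inter> Part n lam" by blast
  qed
  show "\<And>x. x \<in> Part' n J \<inter> Part n lam \<Longrightarrow> psi' (phi n J x) = x"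
  proof -
    fix P assume "P \<in> Part' n J \<inter> Part n lam"
    then obtain A B where AB: "A @ B \<in> Pord_n n" "A \<noteq> []" "\<Union>(set A) = J" "P = set (A @ B)"
      using Part'_alt by blast
    have "phi n J P = map_prod set set (phi_ord n J (A @ B))" using phi_set[OF AB(1-3)] AB(4) by simp
    then have "psi' (phi n J P) = set (psi (phi_ord n J (A @ B)))"
      using set_psi by (metis map_prod_simp surj_pair)
    also have "\<dots> = P" using phi_basic[OF AB(1-3)] AB(4) by simp
    finally show "psi' (phi n J P) = P" .
  qed
  show "\<And>y. y \<in> Part m \<mu> \<times> Part (n - m) \<nu> \<Longrightarrow> phi n J (psi' y) = y"
  proof -
    fix QQ assume QQ: "QQ \<in> Part m \<mu> \<times> Part (n - m) \<nu>"
    obtain Q1 Q2 where Q: "QQ = (Q1, Q2)" by (cases QQ)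
    have Q1: "partition_on {1..m} Q1" and Q2: "partition_on {1..n-m} Q2"
      using QQ Q by (auto simp: Part_alt2)
    obtain L1 where L1: "set L1 = Q1" "distinct L1"
      using finite_distinct_list[OF finite_elements[OF _ Q1(1)]] by auto
    obtain L2 where L2: "set L2 = Q2" "distinct L2"
      using finite_distinct_list[OF finite_elements[OF _ Q2(1)]] by auto
    have inL: "L1 \<in> Pord_n m" "L2 \<in> Pord_n (n - m)" using L1 L2 Q1 Q2 by (auto simp: Pord_n_def)
    note b = psi_basic[OF inL]
    have eq: "psi' QQ = set (psi (L1, L2))" using set_psi L1 L2 Q by simp
    have ps: "psi (L1, L2) = map ((`) (elem_at J)) L1 @ map ((`) (elem_at K)) L2" by (simp add: psi_def)
    have inP: "psi (L1, L2) \<in> Pord_n n" using b(5) Pord'_alt by blast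
    have "phi n J (psi' QQ) = map_prod set set (phi_ord n J (psi (L1, L2)))"
      unfolding eq ps by (rule phi_set) (use inP b(7,8) ps in auto)
    also have "\<dots> = QQ" using b(6) L1 L2 Q by simp
    finally show "phi n J (psi' QQ) = QQ" .
  qed
qed

end

definition Lst :: "nat set list \<Rightarrow> nat list" where
  "Lst Ps = concat (map sorted_list_of_set Ps)"

lemma sigmaP_inv_eq: "sigmaP_inv Ps p = (if 1 \<le> p \<and> p \<le> length (Lst Ps) then Lst Ps ! (p - 1) else p)"
  by (simp add: sigmaP_inv_def Lst_def Let_def)

lemma Lst_props:
  assumes "Ps \<in> Pord_n N"
  shows "distinct (Lst Ps)" "set (Lst Ps) = {1..N}" "length (Lst Ps) = N"
proof -
  have p: "partition_on {1..N} (set Ps)" "distinct Ps" using assms by (auto simp: Pord_n_def)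
  have fin: "\<And>I. I \<in> set Ps \<Longrightarrow> finite I"
  proof -
    fix I assume "I \<in> set Ps"
    then have "I \<subseteq> {1..N}" by (rule block_sub[OF p(1)])
    then show "finite I" using finite_subset by blast
  qed
  have inj: "inj_on sorted_list_of_set (set Ps)"
  proof
    fix X Y assume "X \<in> set Ps" "Y \<in> set Ps" "sorted_list_of_set X = sorted_list_of_set Y"
    then show "X = Y" using fin by (metis set_sorted_list_of_set)
  qed
  show d: "distinct (Lst Ps)" unfolding Lst_def
  proof (rule distinct_concat)
    show "distinct (map sorted_list_of_set Ps)" using inj p(2) by (simp add: distinct_map)
    show "\<And>ys. ys \<in> set (map sorted_list_of_set Ps) \<Longrightarrow> distinct ys" by auto
    fix ys zs assume a: "ys \<in> set (map sorted_list_of_set Ps)" "zs \<in> set (map sorted_list_of_set Ps)" "ys \<noteq> zs"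
    then obtain X Y where XY: "X \<in> set Ps" "Y \<in> set Ps" "ys = sorted_list_of_set X" "zs = sorted_list_of_set Y" by auto
    then have "X \<noteq> Y" using a(3) by auto
    then have "X \<inter> Y = {}" using partition_onD2[OF p(1)] XY(1,2) by (auto dest: disjointD)
    then show "set ys \<inter> set zs = {}" using XY fin by simp
  qed
  show s: "set (Lst Ps) = {1..N}" unfolding Lst_def using fin partition_onD1[OF p(1)] by simp
  show "length (Lst Ps) = N" using distinct_card[OF d] s by simp
qed

lemma sigmaP_inv_permutes:
  assumes "Ps \<in> Pord_n N" shows "sigmaP_inv Ps permutes {1..N}"
proof (rule bij_imp_permutes)
  note L = Lst_props[OF assms]
  have b1: "bij_betw ((!) (Lst Ps)) {..<N} {1..N}" by (rule bij_betw_nth) (use L in auto)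
  have b2: "bij_betw (\<lambda>p. p - 1) {1..N} {..<N}"
    by (rule bij_betwI[where g="\<lambda>p. p + 1"]) auto
  have "bij_betw ((!) (Lst Ps) \<circ> (\<lambda>p. p - 1)) {1..N} {1..N}" by (rule bij_betw_trans[OF b2 b1])
  then show "bij_betw (sigmaP_inv Ps) {1..N} {1..N}"
    by (rule bij_betw_cong[THEN iffD1, rotated]) (auto simp: sigmaP_inv_eq L(3))
  show "\<And>x. x \<notin> {1..N} \<Longrightarrow> sigmaP_inv Ps x = x" by (auto simp: sigmaP_inv_eq L(3))
qed

lemma eps_eq: assumes "Ps \<in> Pord_n N" shows "eps Ps = sign (sigmaP_inv Ps)"
proof -
  have "permutation (sigmaP_inv Ps)"
    using permutes_imp_permutation[OF _ sigmaP_inv_permutes[OF assms]] by simp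
  then show ?thesis unfolding eps_def sigmaP_def by (rule sign_inverse)
qed

lemma sorted_elem_at:
  assumes "finite S" "Y \<subseteq> {1..card S}"
  shows "map (elem_at S) (sorted_list_of_set Y) = sorted_list_of_set (elem_at S ` Y)"
proof -
  have fY: "finite Y" using assms(2) finite_subset by blast
  have inj: "inj_on (elem_at S) Y" using bij_betw_imp_inj_on[OF elem_at_bij[OF assms(1)]] assms(2)
    by (rule inj_on_subset)
  have "sorted_wrt (<) (map (elem_at S) (sorted_list_of_set Y))"
    unfolding sorted_wrt_map
  proof (rule sorted_wrt_mono_rel[of _ "(<)"])
    show "sorted_wrt (<) (sorted_list_of_set Y)" by simp
    fix x y assume xy: "x \<in> set (sorted_list_of_set Y)" "y \<in> set (sorted_list_of_set Y)" "x < y"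
    then have "x \<in> Y" "y \<in> Y" using fY by auto
    then have "1 \<le> x" "y \<le> card S" using assms(2) by auto
    then show "elem_at S x < elem_at S y" using elem_at_mono[OF assms(1) _ xy(3)] by blast
  qed
  moreover have "set (map (elem_at S) (sorted_list_of_set Y)) = elem_at S ` Y" using fY by simp
  moreover have "length (map (elem_at S) (sorted_list_of_set Y)) = card (elem_at S ` Y)"
    using card_image[OF inj] by simp
  ultimately have "sorted_list_of_set (elem_at S ` Y) = map (elem_at S) (sorted_list_of_set Y)"
    using sorted_list_of_set_unique[of "elem_at S ` Y" "map (elem_at S) (sorted_list_of_set Y)"] fY
    by (meson finite_imageI)
  then show ?thesis by simp
qed

lemma even_kk: "even ((k::nat) * (k - 1))"
  by (cases k) auto

lemma even_sum_cards: "even (\<Sum>I\<leftarrow>Ps. card I * (card I - 1))"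
proof (induction Ps)
  case Nil then show ?case by simp
next
  case (Cons a Ps) then show ?case using even_kk[of "card a"] by simp
qed


lemma sum_list_map_cong: "(\<And>x. x \<in> set xs \<Longrightarrow> f x = g x) \<Longrightarrow> sum_list (map f xs) = sum_list (map g xs)"
  by (induction xs) auto

context setting begin

definition gfun :: "nat \<Rightarrow> nat" where
  "gfun x = (if x \<in> {1..m} then elem_at J x else if x \<in> {Suc m..n} then elem_at K (x - m) else x)"

lemma eJ_in: "x \<in> {1..m} \<Longrightarrow> elem_at J x \<in> J" using eJ_img by blast
lemma eK_in: "x \<in> {1..n-m} \<Longrightarrow> elem_at K x \<in> K" using eK_img by blast

lemma sigma0_gfun: "sigma0 n J \<circ> gfun = id"
proof
  fix x show "(sigma0 n J \<circ> gfun) x = id x"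
  proof (cases "x \<in> {1..m}")
    case True
    then show ?thesis using eJ_in[OF True] u_elem_at[OF finJ True] by (simp add: gfun_def sigma0_def)
  next
    case False
    show ?thesis
    proof (cases "x \<in> {Suc m..n}")
      case True
      then have x: "x - m \<in> {1..n-m}" by auto
      have nJ: "elem_at K (x - m) \<notin> J" using eK_in[OF x] JK_disj by blast
      have "u K (elem_at K (x - m)) = x - m" using u_elem_at[OF finK] x card_K by simp
      then show ?thesis using False True nJ eK_in[OF x] by (simp add: gfun_def sigma0_def)
    next
      case False2: False
      then have "x \<notin> J" "x \<notin> K" using False J_sub K_sub m_le by auto
      then have "gfun x = x" unfolding gfun_def using False False2 by auto
      then show ?thesis using \<open>x \<notin> J\<close> \<open>x \<notin> K\<close> by (simp add: sigma0_def)
    qed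
  qed
qed

lemma gfun_sigma0: "gfun \<circ> sigma0 n J = id"
proof
  fix x show "(gfun \<circ> sigma0 n J) x = id x"
  proof (cases "x \<in> J")
    case True
    have "u J x \<in> {1..m}" by (rule u_props(1)[OF finJ True])
    then show ?thesis using True u_props(2)[OF finJ True] by (simp add: gfun_def sigma0_def)
  next
    case False
    show ?thesis
    proof (cases "x \<in> K")
      case True
      have ux: "u K x \<in> {1..n-m}" using u_props(1)[OF finK True] card_K by simp
      then have "m + u K x \<in> {Suc m..n}" "m + u K x \<notin> {1..m}" by auto
      then show ?thesis using True False u_props(2)[OF finK True] by (simp add: gfun_def sigma0_def)
    next
      case False2: False
      then have "x \<notin> {1..n}" using False JK_un by blast
      then have "x \<notin> {1..m}" "x \<notin> {Suc m..n}" using m_le by auto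
      then have "gfun x = x" unfolding gfun_def by auto
      then show ?thesis using False False2 by (simp add: sigma0_def)
    qed
  qed
qed

lemma sign_gfun: "sign gfun = eps0 n J" "permutation gfun"
proof -
  have sup: "{x. sigma0 n J x \<noteq> x} \<subseteq> {1..n}"
    using JK_un by (auto simp: sigma0_def)
  have "permutation (sigma0 n J)"
    unfolding permutation
    using o_bij[OF gfun_sigma0 sigma0_gfun] finite_subset[OF sup] by simp
  moreover have "inv (sigma0 n J) = gfun" by (rule inv_unique_comp[OF sigma0_gfun gfun_sigma0])
  ultimately show "sign gfun = eps0 n J" "permutation gfun"
    unfolding eps0_def by (metis sign_inverse, metis permutation_inverse)
qed

lemma iii_eps':
  assumes "A @ B \<in> Pord_n n" "\<Union>(set A) = J"
  shows "eps' (A @ B) = eps' (map ((`) (u J)) A) * eps' (map ((`) (u K)) B)"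
proof -
  note s = split_AB[OF assms]
  define c where "c = (\<lambda>I::nat set. card I * (card I - 1))"
  have 1: "(\<Sum>I\<leftarrow>map ((`) (u J)) A. c I) = (\<Sum>I\<leftarrow>A. c I)"
  proof -
    have "c (u J ` I) = c I" if I: "I \<in> set A" for I
    proof -
      have "I \<subseteq> J" by (rule block_sub[OF s(1) I])
      then have "card (u J ` I) = card I" by (rule card_image[OF inj_on_subset[OF uJ_inj]])
      then show ?thesis by (simp add: c_def)
    qed
    then have "sum_list (map (\<lambda>I. c (u J ` I)) A) = sum_list (map c A)" by (rule sum_list_map_cong)
    then show ?thesis by (simp add: comp_def)
  qed
  have 2: "(\<Sum>I\<leftarrow>map ((`) (u K)) B. c I) = (\<Sum>I\<leftarrow>B. c I)"
  proof -
    have "c (u K ` I) = c I" if I: "I \<in> set B" for I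
    proof -
      have "I \<subseteq> K" by (rule block_sub[OF s(2) I])
      then have "card (u K ` I) = card I" by (rule card_image[OF inj_on_subset[OF uK_inj]])
      then show ?thesis by (simp add: c_def)
    qed
    then have "sum_list (map (\<lambda>I. c (u K ` I)) B) = sum_list (map c B)" by (rule sum_list_map_cong)
    then show ?thesis by (simp add: comp_def)
  qed
  have ev: "even (\<Sum>I\<leftarrow>A. c I)" using even_sum_cards[of A] by (simp add: c_def)
  have "(\<Sum>I\<leftarrow>A @ B. c I) div 2 = (\<Sum>I\<leftarrow>A. c I) div 2 + (\<Sum>I\<leftarrow>B. c I) div 2"
    using div_plus_div_distrib_dvd_left[OF ev] by simp
  then show ?thesis unfolding eps'_def c_def[symmetric] 1 2 by (simp add: power_add)
qed

end

lemma Lst_u: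
  assumes "finite S" "\<forall>I\<in>set Qs. I \<subseteq> S"
  shows "map (elem_at S) (Lst (map ((`) (u S)) Qs)) = Lst Qs"
  using assms(2)
proof (induction Qs)
  case Nil then show ?case by (simp add: Lst_def)
next
  case (Cons a Qs)
  have a: "a \<subseteq> S" using Cons.prems by simp
  have sub: "u S ` a \<subseteq> {1..card S}" using u_props(1)[OF assms(1)] a by blast
  have img: "elem_at S ` u S ` a = a"
  proof -
    have "elem_at S ` u S ` a = (\<lambda>x. elem_at S (u S x)) ` a" by (simp add: image_image)
    also have "\<dots> = (\<lambda>x. x) ` a" by (rule image_cong) (use u_props(2)[OF assms(1)] a in auto)
    finally show ?thesis by simp
  qed
  have "map (elem_at S) (sorted_list_of_set (u S ` a)) = sorted_list_of_set a"
    using sorted_elem_at[OF assms(1) sub] img by simp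
  moreover have "map (elem_at S) (Lst (map ((`) (u S)) Qs)) = Lst Qs" using Cons by simp
  ultimately show ?case by (simp add: Lst_def)
qed

context setting begin

lemma iii_eps:
  assumes AB: "A @ B \<in> Pord_n n" "A \<noteq> []" "\<Union>(set A) = J"
  shows "eps (A @ B) = eps0 n J * eps (map ((`) (u J)) A) * eps (map ((`) (u K)) B)"
proof -
  define P1 where "P1 = map ((`) (u J)) A"
  define P2 where "P2 = map ((`) (u K)) B"
  note s = split_AB[OF AB(1,3)]
  have w: "P1 \<in> Pord_n m" "P2 \<in> Pord_n (n - m)" using phi_ord_wd[OF AB(1,3)] by (auto simp: P1_def P2_def)
  define \<pi> where "\<pi> = sigmaP_inv (A @ B)"
  define \<pi>1 where "\<pi>1 = sigmaP_inv P1"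
  define \<pi>2 where "\<pi>2 = sigmaP_inv P2"
  have p1: "\<pi>1 permutes {1..m}" unfolding \<pi>1_def by (rule sigmaP_inv_permutes[OF w(1)])
  have p2: "\<pi>2 permutes {1..n-m}" unfolding \<pi>2_def by (rule sigmaP_inv_permutes[OF w(2)])
  define t2 where "t2 = (\<lambda>x. if x \<in> {Suc m..n} then \<pi>2 (x - m) + m else x)"
  have pb: "permutes_bij_finite \<pi>2 {1..n-m} {Suc m..n} (\<lambda>y. y + m) (\<lambda>y. y - m)"
  proof -
    have "bij_betw (\<lambda>y. y + m) {1..n-m} {Suc m..n}"
      by (rule bij_betwI[where g="\<lambda>y. y - m"]) (use m_le in auto)
    then show ?thesis unfolding permutes_bij_finite_def permutes_bij_def permutes_bij_finite_axioms_def
      using p2 by simp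
  qed
  have sign_t2: "sign t2 = sign \<pi>2" unfolding t2_def using permutes_bij_finite.sign_p'[OF pb] by simp
  have perm_t2: "permutation t2"
  proof -
    have "t2 permutes {Suc m..n}" unfolding t2_def
      using permutes_bij.permutes_p'[OF pb[unfolded permutes_bij_finite_def, THEN conjunct1]] by simp
    then show ?thesis by (rule permutes_imp_permutation[rotated]) simp
  qed
  have perm_p1: "permutation \<pi>1" by (rule permutes_imp_permutation[OF _ p1]) simp
  define L1 where "L1 = Lst P1"
  define L2 where "L2 = Lst P2"
  have lenL1: "length L1 = m" unfolding L1_def by (rule Lst_props(3)[OF w(1)])
  have lenL2: "length L2 = n - m" unfolding L2_def by (rule Lst_props(3)[OF w(2)])
  have L: "Lst (A @ B) = map (elem_at J) L1 @ map (elem_at K) L2"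
  proof -
    have "Lst (A @ B) = Lst A @ Lst B" by (simp add: Lst_def)
    moreover have "map (elem_at J) L1 = Lst A"
      unfolding L1_def P1_def by (rule Lst_u[OF finJ]) (use block_sub[OF s(1)] in blast)
    moreover have "map (elem_at K) L2 = Lst B"
      unfolding L2_def P2_def by (rule Lst_u[OF finK]) (use block_sub[OF s(2)] in blast)
    ultimately show ?thesis by simp
  qed
  have lenL: "length (Lst (A @ B)) = n" by (rule Lst_props(3)[OF AB(1)])
  have pi_eq: "\<pi> = gfun \<circ> \<pi>1 \<circ> t2"
  proof
    fix x
    show "\<pi> x = (gfun \<circ> \<pi>1 \<circ> t2) x"
    proof (cases "x \<in> {1..m}")
      case True
      have "\<pi> x = Lst (A @ B) ! (x - 1)" unfolding \<pi>_def sigmaP_inv_eq lenL using True m_le by auto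
      also have "\<dots> = elem_at J (L1 ! (x - 1))"
      proof -
        have "x - 1 < length L1" using True lenL1 by auto
        then show ?thesis unfolding L by (simp add: nth_append)
      qed
      also have "L1 ! (x - 1) = \<pi>1 x" unfolding \<pi>1_def sigmaP_inv_eq L1_def[symmetric] lenL1 using True by simp
      finally have 1: "\<pi> x = elem_at J (\<pi>1 x)" .
      have "\<pi>1 x \<in> {1..m}" using permutes_in_image[OF p1, of x] True by blast
      then have "gfun (\<pi>1 x) = elem_at J (\<pi>1 x)" by (simp add: gfun_def)
      moreover have "t2 x = x" using True by (simp add: t2_def)
      ultimately show ?thesis using 1 by simp
    next
      case False
      show ?thesis
      proof (cases "x \<in> {Suc m..n}")
        case True
        have xm: "x - m \<in> {1..n-m}" using True by auto
        have "\<pi> x = Lst (A @ B) ! (x - 1)" unfolding \<pi>_def sigmaP_inv_eq lenL using True by auto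
        also have "\<dots> = elem_at K (L2 ! (x - 1 - m))" unfolding L using True lenL1 lenL2
          by (auto simp: nth_append)
        also have "L2 ! (x - 1 - m) = \<pi>2 (x - m)"
          unfolding \<pi>2_def sigmaP_inv_eq L2_def[symmetric] lenL2 using xm by (simp add: diff_commute)
        finally have 1: "\<pi> x = elem_at K (\<pi>2 (x - m))" .
        have "\<pi>2 (x - m) \<in> {1..n-m}" using permutes_in_image[OF p2, of "x - m"] xm by blast
        then have t: "t2 x \<in> {Suc m..n}" "t2 x = \<pi>2 (x - m) + m" using True by (auto simp: t2_def)
        then have "\<pi>1 (t2 x) = t2 x" using p1 by (intro permutes_not_in[OF p1]) auto
        moreover have "gfun (t2 x) = elem_at K (\<pi>2 (x - m))" using t by (simp add: gfun_def)
        ultimately show ?thesis using 1 by simp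
      next
        case False2: False
        have "x \<notin> {1..n}" using False False2 by auto
        then have "\<pi> x = x" unfolding \<pi>_def sigmaP_inv_eq lenL by auto
        moreover have "t2 x = x" using False2 unfolding t2_def by auto
        moreover have "\<pi>1 x = x" using permutes_not_in[OF p1 False] .
        moreover have "gfun x = x" using False False2 unfolding gfun_def by auto
        ultimately show ?thesis by simp
      qed
    qed
  qed
  have "eps (A @ B) = sign \<pi>" unfolding \<pi>_def by (rule eps_eq[OF AB(1)])
  also have "\<dots> = sign (gfun \<circ> \<pi>1) * sign t2" unfolding pi_eq
    by (rule sign_compose[OF permutation_compose[OF sign_gfun(2) perm_p1] perm_t2])
  also have "sign (gfun \<circ> \<pi>1) = sign gfun * sign \<pi>1" by (rule sign_compose[OF sign_gfun(2) perm_p1])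
  also have "sign \<pi>1 = eps P1" unfolding \<pi>1_def by (rule eps_eq[OF w(1), symmetric])
  also have "sign t2 = eps P2" unfolding sign_t2 \<pi>2_def by (rule eps_eq[OF w(2), symmetric])
  finally show ?thesis unfolding sign_gfun(1) P1_def P2_def .
qed

end

theorem mainTheorem14:
  fixes n :: nat and lam :: "nat \<Rightarrow> real" and J :: "nat set"
  assumes pos: "(\<Sum>i=1..n. lam i) > 0"
    and J_sub: "J \<subseteq> {1..n}"
    and J_delta: "sJ lam J / real (card J) = delta n lam"
    and J_card: "card J = Nmin n lam"
  shows
    \<comment> \<open>(i)\<close>
    "(\<forall>K. K \<subseteq> {1..n} \<and> K \<noteq> J \<longrightarrow>
        (sJ (lam_prime n lam J) K > 0 \<longleftrightarrow> sJ lam K > 0))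
     \<comment> \<open>(ii)\<close>
     \<and> Pord n lam = Pord n (lam_prime n lam J) \<union> (Pord' n J \<inter> Pord n lam)
     \<and> Pord n (lam_prime n lam J) \<inter> (Pord' n J \<inter> Pord n lam) = {}
     \<and> Part n lam = Part n (lam_prime n lam J) \<union> (Part' n J \<inter> Part n lam)
     \<and> Part n (lam_prime n lam J) \<inter> (Part' n J \<inter> Part n lam) = {}
     \<and> card (Pord n (lam_prime n lam J)) < card (Pord n lam)
     \<and> card (Part n (lam_prime n lam J)) < card (Part n lam)
     \<comment> \<open>well-definedness of phi_ord and phi\<close>
     \<and> phi_ord n J ` Pord' n J \<subseteq> Pord_n (card J) \<times> Pord_n (n - card J)
     \<and> phi n J ` Part' n J \<subseteq> Part_n (card J) \<times> Part_n (n - card J)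
     \<comment> \<open>(iii)\<close>
     \<and> (\<forall>P\<in>Pord' n J. \<forall>P1 P2. phi_ord n J P = (P1, P2) \<longrightarrow>
          eps P = eps0 n J * eps P1 * eps P2 \<and> eps' P = eps' P1 * eps' P2)
     \<comment> \<open>(iv)\<close>
     \<and> bij_betw (phi_ord n J) (Pord' n J \<inter> Pord n lam)
          (Pord (card J) (mu lam J) \<times> Pord (n - card J) (nu n lam J))
     \<and> bij_betw (phi n J) (Part' n J \<inter> Part n lam)
          (Part (card J) (mu lam J) \<times> Part (n - card J) (nu n lam J))"
proof -
  interpret setting n lam J by (rule setting.intro[OF pos J_sub J_delta J_card])
  have iii: "\<forall>P\<in>Pord' n J. \<forall>P1 P2. phi_ord n J P = (P1, P2) \<longrightarrow>
          eps P = eps0 n J * eps P1 * eps P2 \<and> eps' P = eps' P1 * eps' P2"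
  proof (intro ballI allI impI)
    fix P P1 P2 assume P: "P \<in> Pord' n J" and e: "phi_ord n J P = (P1, P2)"
    obtain A B where AB: "P \<in> Pord_n n" "P = A @ B" "A \<noteq> []" "\<Union>(set A) = J"
      using P Pord'_alt by blast
    have AB': "A @ B \<in> Pord_n n" using AB by simp
    have "P1 = map ((`) (u J)) A" "P2 = map ((`) (u (Kc n J))) B"
      using e phi_ord_app[OF AB' AB(3,4)] AB(2) by auto
    then show "eps P = eps0 n J * eps P1 * eps P2 \<and> eps' P = eps' P1 * eps' P2"
      using iii_eps[OF AB' AB(3,4)] iii_eps'[OF AB' AB(4)] AB(2) by simp
  qed
  have i: "\<forall>K. K \<subseteq> {1..n} \<and> K \<noteq> J \<longrightarrow>
        (sJ (lam_prime n lam J) K > 0 \<longleftrightarrow> sJ lam K > 0)"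
    using part_i by blast
  show ?thesis
    using i ii_ord1 ii_ord2 ii_part1 ii_part2 card_ord card_part wd_ord wd_part iii iv_ord iv_part
    by blast
qed


end
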